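(* Let $G$ be a graph and let $X\subseteq V(G)$. Then $\mathrm{cmp}(G)\le \mathrm{cmp}(G-X)+|X|$.
   Context: All graphs are finite and simple. A forest decomposition of a graph $G$ is a pair $(F,(W_x)_{x\in V(F)})$ where $F$ is a forest and $W_x\subseteq V(G)$, such that (1) for every vertex $u$ of $G$, $\{x\in V(F)\mid u\in W_x\}$ induces a nonempty connected subgraph of $F$, and (2) every edge $uv$ of $G$ has both ends in some bag $W_x$. Its width is the maximum size of a bag minus one. It is suitable if additionally (3) $F$ is a subgraph of $G$ with $V(F)=V(G)$, and (4) $u\in W_u$ for every $u\in V(G)$. The complexity $\mathrm{cmp}(G)$ is the minimum width of a suitable forest decomposition of $G$, with the convention $\mathrm{cmp}(G)=0$ if $G$ has no vertices. *)

theory Defs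
  imports Main
begin

definition graph :: "'a set \<Rightarrow> 'a set set \<Rightarrow> bool" where
  "graph V E \<longleftrightarrow> finite V \<and> (\<forall>e\<in>E. \<exists>u v. u \<noteq> v \<and> u \<in> V \<and> v \<in> V \<and> e = {u, v})"

definition del_vertices_edges :: "'a set set \<Rightarrow> 'a set \<Rightarrow> 'a set set" where
  "del_vertices_edges E X = {e \<in> E. e \<inter> X = {}}"

definition walk_in :: "'b set set \<Rightarrow> 'b set \<Rightarrow> 'b list \<Rightarrow> bool" where
  "walk_in E S xs \<longleftrightarrow> xs \<noteq> [] \<and> set xs \<subseteq> S \<and>
     (\<forall>i. Suc i < length xs \<longrightarrow> {xs ! i, xs ! Suc i} \<in> E)"

definition induces_connected :: "'b set set \<Rightarrow> 'b set \<Rightarrow> bool" where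
  "induces_connected E S \<longleftrightarrow> S \<noteq> {} \<and>
     (\<forall>u\<in>S. \<forall>v\<in>S. \<exists>xs. walk_in E S xs \<and> hd xs = u \<and> last xs = v)"

definition has_cycle :: "'b set \<Rightarrow> 'b set set \<Rightarrow> bool" where
  "has_cycle V E \<longleftrightarrow> (\<exists>xs. length xs \<ge> 3 \<and> distinct xs \<and> walk_in E V xs \<and> {last xs, hd xs} \<in> E)"

definition forest :: "'b set \<Rightarrow> 'b set set \<Rightarrow> bool" where
  "forest V E \<longleftrightarrow> graph V E \<and> \<not> has_cycle V E"

definition forest_decomposition ::
  "'a set \<Rightarrow> 'a set set \<Rightarrow> 'b set \<Rightarrow> 'b set set \<Rightarrow> ('b \<Rightarrow> 'a set) \<Rightarrow> bool" where
  "forest_decomposition V E VF EF W \<longleftrightarrow>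
     forest VF EF \<and> (\<forall>x\<in>VF. W x \<subseteq> V) \<and>
     (\<forall>u\<in>V. induces_connected EF {x \<in> VF. u \<in> W x}) \<and>
     (\<forall>e\<in>E. \<exists>x\<in>VF. e \<subseteq> W x)"

definition suitable_forest_decomposition ::
  "'a set \<Rightarrow> 'a set set \<Rightarrow> 'a set set \<Rightarrow> ('a \<Rightarrow> 'a set) \<Rightarrow> bool" where
  "suitable_forest_decomposition V E EF W \<longleftrightarrow>
     forest_decomposition V E V EF W \<and> EF \<subseteq> E \<and> (\<forall>u\<in>V. u \<in> W u)"

text \<open>Width: maximum bag size minus one (bags are nonempty for suitable decompositions).\<close>
definition width :: "'b set \<Rightarrow> ('b \<Rightarrow> 'a set) \<Rightarrow> nat" where
  "width VF W = Max ((\<lambda>x. card (W x)) ` VF) - 1"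

definition cmp :: "'a set \<Rightarrow> 'a set set \<Rightarrow> nat" where
  "cmp V E = (if V = {} then 0 else
     Min {width V W | EF W. suitable_forest_decomposition V E EF W})"

end

theory Submission
  imports Defs
begin

lemma walk_in_single[simp]: "walk_in E S [a] \<longleftrightarrow> a \<in> S"
  by (auto simp: walk_in_def)

lemma walk_in_Cons2:
  "walk_in E S (a # b # xs) \<longleftrightarrow> a \<in> S \<and> {a,b} \<in> E \<and> walk_in E S (b # xs)"
proof -
  have "(\<forall>i. Suc i < length (a#b#xs) \<longrightarrow> {(a#b#xs)!i, (a#b#xs)!Suc i} \<in> E) \<longleftrightarrow>
        {a,b}\<in>E \<and> (\<forall>i. Suc i < length (b#xs) \<longrightarrow> {(b#xs)!i, (b#xs)!Suc i} \<in> E)"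
    (is "?L \<longleftrightarrow> ?R")
  proof
    assume L: ?L
    have "{a,b} \<in> E" using spec[OF L, of 0] by simp
    moreover have "Suc i < length (b#xs) \<longrightarrow> {(b#xs)!i, (b#xs)!Suc i} \<in> E" for i
      using spec[OF L, of "Suc i"] by simp
    ultimately show ?R by blast
  next
    assume R: ?R
    show ?L
    proof (intro allI impI)
      fix i assume "Suc i < length (a#b#xs)"
      then show "{(a#b#xs)!i, (a#b#xs)!Suc i} \<in> E"
        using R by (cases i) auto
    qed
  qed
  then show ?thesis unfolding walk_in_def by auto
qed

lemma walk_in_snoc:
  "xs \<noteq> [] \<Longrightarrow> walk_in E S (xs @ [a]) \<longleftrightarrow> walk_in E S xs \<and> a \<in> S \<and> {last xs, a} \<in> E"
proof (induction xs rule: list_nonempty_induct)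
  case (single x)
  then show ?case by (auto simp: walk_in_Cons2)
next
  case (cons x xs)
  then obtain c rest where "xs = c # rest" by (cases xs) auto
  then show ?case using cons by (auto simp: walk_in_Cons2)
qed

definition erel :: "'b set set \<Rightarrow> 'b set \<Rightarrow> 'b \<Rightarrow> 'b \<Rightarrow> bool" where
  "erel E S = (\<lambda>a b. {a,b} \<in> E \<and> a \<in> S \<and> b \<in> S)"

lemma walk_rtp: "walk_in E S xs \<Longrightarrow> (\<lambda>a b. {a,b} \<in> E)\<^sup>*\<^sup>* (hd xs) (last xs)"
proof (induction xs)
  case Nil
  then show ?case by (simp add: walk_in_def)
next
  case (Cons a xs)
  show ?case
  proof (cases xs)
    case Nil
    then show ?thesis by simp
  next
    case (Cons b rest)
    then show ?thesis using Cons.prems Cons.IH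
      by (auto simp: walk_in_Cons2 intro: converse_rtranclp_into_rtranclp)
  qed
qed

lemma rtp_walk:
  "(erel E S)\<^sup>*\<^sup>* u v \<Longrightarrow> u \<in> S \<Longrightarrow> \<exists>xs. walk_in E S xs \<and> hd xs = u \<and> last xs = v"
proof (induction rule: converse_rtranclp_induct)
  case base
  then show ?case by (intro exI[of _ "[v]"]) simp
next
  case (step a b)
  then have "b \<in> S" "{a,b} \<in> E" by (auto simp: erel_def)
  then obtain xs where xs: "walk_in E S xs" "hd xs = b" "last xs = v" using step by blast
  then obtain rest where "xs = b # rest" by (cases xs) (auto simp: walk_in_def)
  then show ?case using xs step.prems \<open>{a,b} \<in> E\<close>
    by (intro exI[of _ "a # xs"]) (auto simp: walk_in_Cons2)
qed

lemma sym_rtp: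
  assumes "\<And>a b. r a b \<Longrightarrow> r b a" "r\<^sup>*\<^sup>* a b" shows "r\<^sup>*\<^sup>* b a"
  using assms(2)
proof (induction rule: rtranclp_induct)
  case base
  then show ?case by simp
next
  case (step y z)
  then show ?case using assms(1) by (metis converse_rtranclp_into_rtranclp)
qed

lemma ic_intro:
  assumes "r \<in> S" and "\<And>v. v \<in> S \<Longrightarrow> (erel E S)\<^sup>*\<^sup>* r v"
  shows "induces_connected E S"
proof -
  have sym: "erel E S a b \<Longrightarrow> erel E S b a" for a b by (auto simp: erel_def insert_commute)
  have *: "\<exists>xs. walk_in E S xs \<and> hd xs = u \<and> last xs = v" if "u \<in> S" "v \<in> S" for u v
  proof -
    have ur: "(erel E S)\<^sup>*\<^sup>* u r" by (rule sym_rtp[of "erel E S", OF sym assms(2)[OF that(1)]])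
    have "(erel E S)\<^sup>*\<^sup>* u v" by (rule rtranclp_trans[OF ur assms(2)[OF that(2)]])
    from rtp_walk[OF this that(1)] show ?thesis .
  qed
  show ?thesis unfolding induces_connected_def
  proof (intro conjI ballI)
    show "S \<noteq> {}" using assms(1) by blast
  qed (rule *)
qed

lemma walk_mono: "walk_in E S xs \<Longrightarrow> E \<subseteq> E' \<Longrightarrow> S \<subseteq> S' \<Longrightarrow> walk_in E' S' xs"
  by (auto simp: walk_in_def)

lemma ic_mono:
  assumes "induces_connected E S" "E \<subseteq> E'" shows "induces_connected E' S"
  unfolding induces_connected_def
proof (intro conjI ballI)
  show "S \<noteq> {}" using assms(1) by (simp add: induces_connected_def)
  fix u v assume "u \<in> S" "v \<in> S"
  then obtain xs where "walk_in E S xs" "hd xs = u" "last xs = v"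
    using assms(1) unfolding induces_connected_def by blast
  then show "\<exists>xs. walk_in E' S xs \<and> hd xs = u \<and> last xs = v"
    using walk_mono[OF _ assms(2) order_refl] by blast
qed

lemma walk_restrict:
  assumes "walk_in E S xs" "\<And>a b. a \<in> set xs \<Longrightarrow> b \<in> set xs \<Longrightarrow> {a,b} \<in> E \<Longrightarrow> {a,b} \<in> E2"
    "set xs \<subseteq> S2"
  shows "walk_in E2 S2 xs"
  using assms unfolding walk_in_def by (metis Suc_lessD nth_mem)

lemma rot1:
  assumes "length xs \<ge> 3" "walk_in E S xs" "{last xs, hd xs} \<in> E"
  shows "walk_in E S (rotate1 xs) \<and> {last (rotate1 xs), hd (rotate1 xs)} \<in> E"
proof -
  obtain a b rest where xs: "xs = a # b # rest" using assms(1)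
    by (metis Suc_le_length_iff numeral_3_eq_3 Suc_leD)
  have w: "walk_in E S (b # rest)" "a \<in> S" "{a,b} \<in> E" using assms(2) xs by (auto simp: walk_in_Cons2)
  have "last xs = last (b # rest)" using xs by simp
  then have "{last (b#rest), a} \<in> E" using assms(3) xs by (simp add: insert_commute)
  then have "walk_in E S ((b#rest) @ [a])" using walk_in_snoc[of "b#rest" E S a] w(1,2) by blast
  moreover have "rotate1 xs = (b#rest) @ [a]" using xs by simp
  ultimately show ?thesis using w(3) by (simp add: insert_commute)
qed

lemma rotn:
  assumes "length xs \<ge> 3" "walk_in E S xs" "{last xs, hd xs} \<in> E"
  shows "walk_in E S (rotate n xs) \<and> {last (rotate n xs), hd (rotate n xs)} \<in> E"
proof (induction n)
  case 0
  then show ?case using assms by simp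
next
  case (Suc n)
  have "length (rotate n xs) \<ge> 3" using assms(1) by simp
  from rot1[OF this] Suc.IH show ?case unfolding rotate_Suc by blast
qed

lemma graph_del: "graph V E \<Longrightarrow> graph (V - X) (del_vertices_edges E X)"
  unfolding graph_def del_vertices_edges_def by fastforce

lemma del_del: "del_vertices_edges (del_vertices_edges E X) {x} = del_vertices_edges E (insert x X)"
  unfolding del_vertices_edges_def by auto

lemma hd_ne_last: "distinct ys \<Longrightarrow> length ys \<ge> 2 \<Longrightarrow> hd ys \<noteq> last ys"
  by (cases ys) auto

lemma step_dec:
  assumes G: "graph V E" and xV: "x \<in> V"
    and D: "suitable_forest_decomposition (V - {x}) (del_vertices_edges E {x}) EF' W'"
  shows "\<exists>EF W. suitable_forest_decomposition V E EF W \<and> card (W x) = 1 \<and>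
           (\<forall>v\<in>V-{x}. card (W v) \<le> card (W' v) + 1)"
proof -
  define V' where "V' = V - {x}"
  define E' where "E' = del_vertices_edges E {x}"
  define R where "R = (\<lambda>a b. {a,b} \<in> EF')"
  define N where "N = {y \<in> V'. {x,y} \<in> E}"
  define c where "c = (\<lambda>y. SOME z. z \<in> N \<and> R\<^sup>*\<^sup>* y z)"
  define A where "A = {{x, c y} | y. y \<in> N}"
  define EF where "EF = EF' \<union> A"
  define Adj where "Adj = {v \<in> V'. \<exists>y\<in>N. R\<^sup>*\<^sup>* y v}"
  define W where "W = (\<lambda>v. if v = x then {x} else if v \<in> Adj then insert x (W' v) else W' v)"
  have F': "forest V' EF'" and W'sub: "\<forall>v\<in>V'. W' v \<subseteq> V'"
    and IC': "\<forall>u\<in>V'. induces_connected EF' {v \<in> V'. u \<in> W' v}"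
    and Cov': "\<forall>e\<in>E'. \<exists>v\<in>V'. e \<subseteq> W' v" and EF'E': "EF' \<subseteq> E'"
    and Wself: "\<forall>u\<in>V'. u \<in> W' u"
    using D unfolding suitable_forest_decomposition_def forest_decomposition_def V'_def E'_def
    by auto
  have finV: "finite V" using G graph_def by auto
  have finV': "finite V'" using finV V'_def by simp
  have xV': "x \<notin> V'" by (simp add: V'_def)
  have V'V: "V' \<subseteq> V" by (auto simp: V'_def)
  have EF'edge: "e \<in> EF' \<Longrightarrow> \<exists>u v. u \<noteq> v \<and> u \<in> V' \<and> v \<in> V' \<and> e = {u,v}" for e
    using F' unfolding forest_def graph_def by blast
  have Rsym: "R a b \<Longrightarrow> R b a" for a b by (simp add: R_def insert_commute)
  have RV': "a \<in> V' \<and> b \<in> V'" if Rab: "R a b" for a b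
  proof -
    have "{a,b} \<in> EF'" using Rab R_def by simp
    then obtain u v where "u \<noteq> v" "u \<in> V'" "v \<in> V'" "{a,b} = {u,v}" using EF'edge by blast
    then show ?thesis by (metis doubleton_eq_iff)
  qed
  have RsV': "b \<in> V'" if "R\<^sup>*\<^sup>* a b" "a \<in> V'" for a b
    using that by (induction rule: rtranclp_induct) (auto dest: RV')
  have Rsts: "R\<^sup>*\<^sup>* b a" if "R\<^sup>*\<^sup>* a b" for a b
    by (rule sym_rtp[of R, OF Rsym that])
  have cprop: "c y \<in> N \<and> R\<^sup>*\<^sup>* y (c y)" if "y \<in> N" for y
    unfolding c_def by (rule someI[of _ y]) (simp add: that)
  have ceq: "c y1 = c y2" if "R\<^sup>*\<^sup>* y1 y2" for y1 y2
  proof -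
    have "(\<lambda>z. z \<in> N \<and> R\<^sup>*\<^sup>* y1 z) = (\<lambda>z. z \<in> N \<and> R\<^sup>*\<^sup>* y2 z)"
    proof (intro ext iffI)
      fix z assume "z \<in> N \<and> R\<^sup>*\<^sup>* y1 z"
      then show "z \<in> N \<and> R\<^sup>*\<^sup>* y2 z" using Rsts[OF that] by (meson rtranclp_trans)
    next
      fix z assume "z \<in> N \<and> R\<^sup>*\<^sup>* y2 z"
      then show "z \<in> N \<and> R\<^sup>*\<^sup>* y1 z" using that by (meson rtranclp_trans)
    qed
    then show ?thesis unfolding c_def by simp
  qed
  have NV': "N \<subseteq> V'" by (auto simp: N_def)
  have E'E: "E' \<subseteq> E" by (auto simp: E'_def del_vertices_edges_def)
  have AE: "A \<subseteq> E" using cprop by (auto simp: A_def N_def)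
  have EFE: "EF \<subseteq> E" using AE E'E EF'E' by (auto simp: EF_def)
  have EF'x: "x \<notin> e" if "e \<in> EF'" for e
    using EF'E' that by (auto simp: E'_def del_vertices_edges_def)
  have Ax: "e \<in> A \<Longrightarrow> x \<in> e" for e by (auto simp: A_def)
  have gEF: "graph V EF" unfolding graph_def
  proof (intro conjI ballI finV)
    fix e assume "e \<in> EF"
    then have "e \<in> EF' \<or> e \<in> A" by (simp add: EF_def)
    then show "\<exists>u v. u \<noteq> v \<and> u \<in> V \<and> v \<in> V \<and> e = {u,v}"
    proof
      assume "e \<in> EF'" then show ?thesis using EF'edge V'V by blast
    next
      assume "e \<in> A" then obtain y where y: "y \<in> N" "e = {x, c y}" by (auto simp: A_def)
      then have "c y \<in> V'" using cprop NV' by blast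
      then show ?thesis using y xV xV' V'V
        by (intro exI[of _ x] exI[of _ "c y"]) auto
    qed
  qed
  have ncyc: "\<not> has_cycle V EF"
  proof
    assume "has_cycle V EF"
    then obtain xs where L: "length xs \<ge> 3" and Dx: "distinct xs" and Wk: "walk_in EF V xs"
      and Cl: "{last xs, hd xs} \<in> EF" unfolding has_cycle_def by blast
    have xsne: "xs \<noteq> []" using L by auto
    show False
    proof (cases "x \<in> set xs")
      case False
      have sub: "{a,b} \<in> EF'" if "a \<in> set xs" "b \<in> set xs" "{a,b} \<in> EF" for a b
      proof -
        have "{a,b} \<notin> A" using Ax False that(1,2) by blast
        then show ?thesis using that(3) by (simp add: EF_def)
      qed
      have "set xs \<subseteq> V'" using Wk False by (auto simp: walk_in_def V'_def)
      then have "walk_in EF' V' xs" using walk_restrict[OF Wk sub] by blast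
      moreover have "{last xs, hd xs} \<in> EF'" using sub[OF _ _ Cl] xsne by simp
      ultimately have "has_cycle V' EF'" using L Dx unfolding has_cycle_def by blast
      then show False using F' by (simp add: forest_def)
    next
      case True
      then obtain i where i: "i < length xs" "xs ! i = x" by (meson in_set_conv_nth)
      define zs where "zs = rotate i xs"
      have hz: "hd zs = x" using i hd_rotate_conv_nth[of xs i] xsne by (simp add: zs_def)
      have wz: "walk_in EF V zs" and cz: "{last zs, hd zs} \<in> EF"
        using rotn[OF L Wk Cl, of i] by (auto simp: zs_def)
      have Lz: "length zs \<ge> 3" and Dz: "distinct zs" using L Dx by (auto simp: zs_def)
      obtain ys where zs: "zs = x # ys" using hz Lz by (cases zs) auto
      obtain a ys' where ys: "ys = a # ys'" using Lz zs by (cases ys) auto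
      have ys'ne: "ys' \<noteq> []" using Lz zs ys by auto
      have xys: "x \<notin> set ys" using Dz zs by simp
      have "{x, a} \<in> EF" and wys: "walk_in EF V ys" using wz zs ys by (auto simp: walk_in_Cons2)
      have sub: "{p,q} \<in> EF'" if "p \<in> set ys" "q \<in> set ys" "{p,q} \<in> EF" for p q
      proof -
        have "{p,q} \<notin> A" using Ax xys that(1,2) by blast
        then show ?thesis using that(3) by (simp add: EF_def)
      qed
      have "set ys \<subseteq> V'" using wys xys by (auto simp: walk_in_def V'_def)
      then have "walk_in EF' V' ys" using walk_restrict[OF wys sub] by blast
      from walk_rtp[OF this] have Rhl: "R\<^sup>*\<^sup>* (hd ys) (last ys)" unfolding R_def .
      have "{x, a} \<in> A" using \<open>{x, a} \<in> EF\<close> EF'x by (auto simp: EF_def)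
      then obtain y1 where y1: "y1 \<in> N" "{x, a} = {x, c y1}" by (auto simp: A_def)
      have "a \<noteq> x" using xys ys by auto
      then have a1: "a = c y1" using y1(2) by (metis doubleton_eq_iff)
      have "{x, last ys} \<in> EF" using cz zs ys by (simp add: insert_commute)
      then have "{x, last ys} \<in> A" using EF'x by (auto simp: EF_def)
      then obtain y2 where y2: "y2 \<in> N" "{x, last ys} = {x, c y2}" by (auto simp: A_def)
      have "last ys \<noteq> x" using xys ys by (metis last_in_set list.distinct(1))
      then have a2: "last ys = c y2" using y2(2) by (metis doubleton_eq_iff)
      have e1: "c y1 = c (c y1)" by (rule ceq) (use cprop[OF y1(1)] in blast)
      have e2: "c y2 = c (c y2)" by (rule ceq) (use cprop[OF y2(1)] in blast)
      have "R\<^sup>*\<^sup>* (c y1) (c y2)" using Rhl a1 a2 ys by simp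
      then have e3: "c (c y1) = c (c y2)" by (rule ceq)
      have "a = last ys" unfolding a1 a2 using e1 e2 e3 by argo
      moreover have "last ys \<in> set ys'" using ys ys'ne by simp
      moreover have "a \<notin> set ys'" using Dz zs ys by simp
      ultimately show False by simp
    qed
  qed
  have Wsub: "\<forall>v\<in>V. W v \<subseteq> V" using W'sub xV V'V by (auto simp: W_def V'_def)
  have Wself2: "\<forall>u\<in>V. u \<in> W u" using Wself by (auto simp: W_def V'_def)
  have cov: "\<forall>e\<in>E. \<exists>v\<in>V. e \<subseteq> W v"
  proof
    fix e assume eE: "e \<in> E"
    show "\<exists>v\<in>V. e \<subseteq> W v"
    proof (cases "x \<in> e")
      case False
      then have "e \<in> E'" using eE by (auto simp: E'_def del_vertices_edges_def)
      then obtain v where v: "v \<in> V'" "e \<subseteq> W' v" using Cov' by blast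
      then have "W' v \<subseteq> W v" using xV' by (auto simp: W_def)
      then show ?thesis using v V'V by blast
    next
      case True
      obtain u w where uw: "u \<noteq> w" "u \<in> V" "w \<in> V" "e = {u,w}" using G eE unfolding graph_def by blast
      have "\<exists>y. y \<noteq> x \<and> y \<in> V \<and> e = {x,y}"
      proof (cases "x = u")
        case True then show ?thesis using uw by (intro exI[of _ w]) auto
      next
        case False
        then have "x = w" using \<open>x \<in> e\<close> uw(4) by blast
        then show ?thesis using uw by (intro exI[of _ u]) (auto simp: insert_commute)
      qed
      then obtain y where y: "y \<noteq> x" "y \<in> V" "e = {x,y}" by blast
      then have yN: "y \<in> N" using eE by (auto simp: N_def V'_def)
      then have "y \<in> Adj" using NV' by (auto simp: Adj_def)
      then have "e \<subseteq> W y" using y Wself NV' yN by (auto simp: W_def)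
      then show ?thesis using y by blast
    qed
  qed
  have conn: "\<forall>u\<in>V. induces_connected EF {v \<in> V. u \<in> W v}"
  proof
    fix u assume uV: "u \<in> V"
    show "induces_connected EF {v \<in> V. u \<in> W v}"
    proof (cases "u = x")
      case False
      then have uV': "u \<in> V'" using uV by (simp add: V'_def)
      have "{v \<in> V. u \<in> W v} = {v \<in> V'. u \<in> W' v}" using False by (auto simp: W_def V'_def)
      then show ?thesis using ic_mono[OF bspec[OF IC' uV']] by (simp add: EF_def)
    next
      case True
      have Sx: "{v \<in> V. u \<in> W v} = insert x Adj"
        using True xV W'sub xV' by (auto simp: W_def Adj_def V'_def)
      define S where "S = insert x Adj"
      have P: "(erel EF S)\<^sup>*\<^sup>* y v" if "R\<^sup>*\<^sup>* y v" "y \<in> N" for y v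
        using that(1)
      proof (induction rule: rtranclp_induct)
        case base
        then show ?case by simp
      next
        case (step b d)
        have "b \<in> V'" "d \<in> V'" using RV'[OF step(2)] by auto
        moreover have "R\<^sup>*\<^sup>* y d" using step(1,2) by (rule rtranclp.rtrancl_into_rtrancl)
        ultimately have "b \<in> S" "d \<in> S" using step(1) that(2) by (auto simp: S_def Adj_def)
        moreover have "{b,d} \<in> EF" using step(2) by (simp add: R_def EF_def)
        ultimately have "erel EF S b d" by (simp add: erel_def)
        with step(3) show ?case by (rule rtranclp.rtrancl_into_rtrancl)
      qed
      have "(erel EF S)\<^sup>*\<^sup>* x v" if "v \<in> S" for v
      proof (cases "v = x")
        case True then show ?thesis by simp
      next
        case False
        then have "v \<in> Adj" using that by (simp add: S_def)
        then obtain y where y: "y \<in> N" "R\<^sup>*\<^sup>* y v" by (auto simp: Adj_def)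
        have cy: "c y \<in> N" "R\<^sup>*\<^sup>* y (c y)" using cprop[OF y(1)] by auto
        have "c y \<in> Adj" using cy NV' by (auto simp: Adj_def)
        moreover have "{x, c y} \<in> EF" using y(1) by (auto simp: EF_def A_def)
        ultimately have "erel EF S x (c y)" by (simp add: erel_def S_def)
        moreover have "(erel EF S)\<^sup>*\<^sup>* (c y) y" using P[OF Rsts[OF cy(2)] cy(1)] .
        moreover have "(erel EF S)\<^sup>*\<^sup>* y v" using P[OF y(2) y(1)] .
        ultimately show ?thesis by (meson converse_rtranclp_into_rtranclp rtranclp_trans)
      qed
      then have "induces_connected EF S" by (intro ic_intro[of x]) (auto simp: S_def)
      then show ?thesis using Sx S_def by simp
    qed
  qed
  have "suitable_forest_decomposition V E EF W"
    unfolding suitable_forest_decomposition_def forest_decomposition_def forest_def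
    using gEF ncyc Wsub conn cov EFE Wself2 by blast
  moreover have "card (W x) = 1" by (simp add: W_def)
  moreover have "\<forall>v\<in>V-{x}. card (W v) \<le> card (W' v) + 1"
  proof
    fix v assume v: "v \<in> V - {x}"
    then have "finite (W' v)" using W'sub finV' V'_def by (meson finite_subset)
    then show "card (W v) \<le> card (W' v) + 1" using v by (simp add: W_def card_insert_if)
  qed
  ultimately show ?thesis by blast
qed

lemma exists_dec: "finite V \<Longrightarrow> graph V E \<Longrightarrow> \<exists>EF W. suitable_forest_decomposition V E EF W"
proof (induction V arbitrary: E rule: finite_induct)
  case empty
  then have "E = {}" unfolding graph_def by blast
  then show ?case
    by (intro exI[of _ "{}"] exI[of _ "\<lambda>_. {}"])
      (auto simp: suitable_forest_decomposition_def forest_decomposition_def forest_def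
        graph_def has_cycle_def walk_in_def)
next
  case (insert x F)
  have "graph F (del_vertices_edges E {x})"
    using graph_del[OF insert.prems, of "{x}"] insert.hyps(2) by simp
  then obtain EF' W' where "suitable_forest_decomposition F (del_vertices_edges E {x}) EF' W'"
    using insert.IH by blast
  then have "suitable_forest_decomposition (insert x F - {x}) (del_vertices_edges E {x}) EF' W'"
    using insert.hyps(2) by simp
  from step_dec[OF insert.prems _ this] show ?case by blast
qed

lemma width_le_card:
  assumes "finite V" "V \<noteq> {}" "\<forall>v\<in>V. W v \<subseteq> V" shows "width V W \<le> card V"
proof -
  have "Max ((\<lambda>x. card (W x)) ` V) \<le> card V"
    using assms by (auto simp: Max_le_iff intro: card_mono)
  then show ?thesis unfolding width_def by simp
qed

lemma cmp_facts:
  assumes G: "graph V E" and ne: "V \<noteq> {}"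
  shows "\<exists>EF W. suitable_forest_decomposition V E EF W \<and> cmp V E = width V W"
    and "suitable_forest_decomposition V E EF W \<Longrightarrow> cmp V E \<le> width V W"
proof -
  define Ws where "Ws = {width V W | EF W. suitable_forest_decomposition V E EF W}"
  have fin: "finite V" using G graph_def by auto
  have "Ws \<subseteq> {..card V}"
  proof
    fix w assume "w \<in> Ws"
    then obtain EF0 W0 where sw: "suitable_forest_decomposition V E EF0 W0" "w = width V W0"
      unfolding Ws_def by blast
    then have "\<forall>v\<in>V. W0 v \<subseteq> V"
      unfolding suitable_forest_decomposition_def forest_decomposition_def by blast
    then show "w \<in> {..card V}" using width_le_card[OF fin ne] sw(2) by simp
  qed
  then have fW: "finite Ws" by (rule finite_subset) simp
  have "Ws \<noteq> {}" using exists_dec[OF fin G] by (auto simp: Ws_def)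
  have cm: "cmp V E = Min Ws" using ne by (simp add: cmp_def Ws_def)
  have "Min Ws \<in> Ws" using fW \<open>Ws \<noteq> {}\<close> by (rule Min_in)
  then obtain EF0 W0 where "suitable_forest_decomposition V E EF0 W0" "Min Ws = width V W0"
    unfolding Ws_def by blast
  then show "\<exists>EF W. suitable_forest_decomposition V E EF W \<and> cmp V E = width V W"
    using cm by metis
  show "suitable_forest_decomposition V E EF W \<Longrightarrow> cmp V E \<le> width V W"
  proof -
    assume "suitable_forest_decomposition V E EF W"
    then have "width V W \<in> Ws" unfolding Ws_def by blast
    then show ?thesis using cm fW by simp
  qed
qed

lemma cmp_step:
  assumes G: "graph V E" and xV: "x \<in> V"
  shows "cmp V E \<le> cmp (V - {x}) (del_vertices_edges E {x}) + 1"
proof -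
  have G': "graph (V - {x}) (del_vertices_edges E {x})" by (rule graph_del[OF G])
  have fin: "finite V" using G graph_def by auto
  obtain EF' W' where D: "suitable_forest_decomposition (V - {x}) (del_vertices_edges E {x}) EF' W'"
    and Cw: "V - {x} \<noteq> {} \<Longrightarrow> cmp (V - {x}) (del_vertices_edges E {x}) = width (V - {x}) W'"
  proof (cases "V - {x} = {}")
    case True
    obtain EF0 W0 where "suitable_forest_decomposition (V - {x}) (del_vertices_edges E {x}) EF0 W0"
      using exists_dec[OF _ G'] fin by blast
    then show ?thesis using that True by blast
  next
    case False
    then show ?thesis using that cmp_facts(1)[OF G' False] by blast
  qed
  obtain EF W where D2: "suitable_forest_decomposition V E EF W" and c1: "card (W x) = 1"
    and cb: "\<forall>v\<in>V-{x}. card (W v) \<le> card (W' v) + 1"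
    using step_dec[OF G xV D] by blast
  have ne: "V \<noteq> {}" using xV by blast
  have le: "cmp V E \<le> width V W" by (rule cmp_facts(2)[OF G ne D2])
  show ?thesis
  proof (cases "V - {x} = {}")
    case True
    then have "V = {x}" using xV by blast
    then have "width V W = 0" using c1 by (simp add: width_def)
    then show ?thesis using le by simp
  next
    case False
    define M where "M = Max ((\<lambda>v. card (W' v)) ` (V - {x}))"
    have finW': "finite (W' v)" if "v \<in> V - {x}" for v
    proof -
      have "W' v \<subseteq> V - {x}" using D that
        unfolding suitable_forest_decomposition_def forest_decomposition_def by blast
      then show ?thesis using fin by (meson finite_Diff finite_subset)
    qed
    obtain v0 where v0: "v0 \<in> V - {x}" using False by blast
    have "v0 \<in> W' v0" using D v0 unfolding suitable_forest_decomposition_def by blast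
    then have "card (W' v0) \<ge> 1" using finW'[OF v0]
      by (metis One_nat_def Suc_leI card_gt_0_iff empty_iff)
    moreover have "card (W' v0) \<le> M" unfolding M_def using fin v0 by (intro Max_ge) auto
    ultimately have M1: "M \<ge> 1" by simp
    have "\<forall>v\<in>V. card (W v) \<le> M + 1"
    proof
      fix v assume "v \<in> V"
      show "card (W v) \<le> M + 1"
      proof (cases "v = x")
        case True then show ?thesis using c1 by simp
      next
        case False
        then have vv: "v \<in> V - {x}" using \<open>v \<in> V\<close> by simp
        have "card (W' v) \<le> M" unfolding M_def using fin vv by (intro Max_ge) auto
        moreover have "card (W v) \<le> card (W' v) + 1" using cb vv by blast
        ultimately show ?thesis by linarith
      qed
    qed
    then have "Max ((\<lambda>v. card (W v)) ` V) \<le> M + 1" using fin ne by (simp add: Max_le_iff)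
    then have "width V W \<le> M" unfolding width_def by simp
    moreover have "width (V - {x}) W' = M - 1" unfolding width_def M_def by simp
    ultimately show ?thesis using le Cw[OF False] M1 by simp
  qed
qed

theorem lemma3p3:
  fixes V :: "'a set" and E :: "'a set set" and X :: "'a set"
  assumes "graph V E" and "X \<subseteq> V"
  shows "cmp V E \<le> cmp (V - X) (del_vertices_edges E X) + card X"
proof -
  have fin: "finite V" using assms(1) graph_def by auto
  have "finite X" using fin assms(2) finite_subset by blast
  then show ?thesis using assms(2)
  proof (induction X rule: finite_induct)
    case empty
    have "del_vertices_edges E {} = E" by (simp add: del_vertices_edges_def)
    then show ?case by simp
  next
    case (insert x F)
    have FV: "F \<subseteq> V" using insert.prems by blast
    have IH: "cmp V E \<le> cmp (V - F) (del_vertices_edges E F) + card F" by (rule insert.IH[OF FV])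
    have G: "graph (V - F) (del_vertices_edges E F)" by (rule graph_del[OF assms(1)])
    have xVF: "x \<in> V - F" using insert.prems insert.hyps(2) by blast
    have eqV: "V - F - {x} = V - insert x F" by blast
    have st: "cmp (V - F) (del_vertices_edges E F) \<le> cmp (V - insert x F) (del_vertices_edges E (insert x F)) + 1"
      using cmp_step[OF G xVF] unfolding del_del eqV .
    have "card (insert x F) = card F + 1" using insert.hyps by simp
    then show ?case using IH st by linarith
  qed
qed

end
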